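(* Let $n \geq 1$ be an integer, let $\lambda_0 \geq 0 > \lambda_1 \geq \cdots \geq \lambda_n$ be real numbers and let $z = a + bi$ with $a \in \mathbb{R}$ and $b > 0$. If $\lambda_0 + \sum_{j=1}^n \lambda_j - 2|z| \geq 0$, then there is an $(n+3) \times (n+3)$ normal centrosymmetric nonnegative matrix with eigenvalues $\lambda_0, \lambda_1, \ldots, \lambda_n, z, \overline{z}$.
   Context: $J$ denotes the reverse identity matrix of the appropriate size (ones on the anti-diagonal, zeros elsewhere). A square matrix $Q$ is centrosymmetric if $JQJ = Q$, nonnegative if all entries are nonnegative, and normal if $QQ^* = Q^*Q$. *)

theory Defs
  imports "Jordan_Normal_Form.Schur_Decomposition" "Jordan_Normal_Form.Char_Poly"
begin

definition rev_id_mat :: "nat \<Rightarrow> 'a :: {zero,one} mat" where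
  "rev_id_mat k = mat k k (\<lambda>(i,j). if i + j + 1 = k then 1 else 0)"

definition centrosymmetric :: "'a :: comm_ring_1 mat \<Rightarrow> bool" where
  "centrosymmetric Q \<longleftrightarrow> square_mat Q \<and>
     rev_id_mat (dim_row Q) * Q * rev_id_mat (dim_row Q) = Q"

definition nonneg_mat :: "real mat \<Rightarrow> bool" where
  "nonneg_mat Q \<longleftrightarrow> (\<forall>i < dim_row Q. \<forall>j < dim_col Q. Q $$ (i,j) \<ge> 0)"

definition normal_mat :: "real mat \<Rightarrow> bool" where
  "normal_mat Q \<longleftrightarrow> (let C = map_mat complex_of_real Q in
     C * mat_adjoint C = mat_adjoint C * C)"

definition has_eigenvalues :: "real mat \<Rightarrow> complex list \<Rightarrow> bool" where
  "has_eigenvalues Q es \<longleftrightarrow>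
     char_poly (map_mat complex_of_real Q) = (\<Prod>e\<leftarrow>es. [:-e, 1:])"

end

theory Submission
  imports Defs
begin


definition Rz :: "real \<Rightarrow> real \<Rightarrow> real mat" where
  "Rz a b = mat 2 2 (\<lambda>(i,j). if i = j then a else if i = 0 then b else - b)"

fun Dm :: "real \<Rightarrow> real \<Rightarrow> real list \<Rightarrow> real mat" where
  "Dm a b [] = Rz a b"
| "Dm a b (d # ds) = four_block_mat (mat 1 1 (\<lambda>_. d)) (0\<^sub>m 1 (length ds + 2))
      (0\<^sub>m (length ds + 2) 1) (Dm a b ds)"

lemma Dm_carrier: "Dm a b ds \<in> carrier_mat (length ds + 2) (length ds + 2)"
  by (induction ds) (auto simp: Rz_def)

lemma Dm_index: "i < length ds + 2 \<Longrightarrow> j < length ds + 2 \<Longrightarrow> Dm a b ds $$ (i,j) =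
  (if i < length ds \<or> j < length ds then (if i = j then ds ! i else 0)
   else Rz a b $$ (i - length ds, j - length ds))"
proof (induction ds arbitrary: i j)
  case Nil
  then show ?case by simp
next
  case (Cons d ds)
  have c: "Dm a b ds \<in> carrier_mat (length ds + 2) (length ds + 2)" by (rule Dm_carrier)
  show ?case
  proof (cases "i = 0")
    case True
    then show ?thesis using Cons.prems c by auto
  next
    case False
    note i0 = False
    show ?thesis
    proof (cases "j = 0")
      case True
      then show ?thesis using Cons.prems c i0 by auto
    next
      case False
      have "Dm a b (d # ds) $$ (i,j) = Dm a b ds $$ (i - 1, j - 1)"
        using Cons.prems c i0 False by auto
      also have "\<dots> = (if i - 1 < length ds \<or> j - 1 < length ds then (if i - 1 = j - 1 then ds ! (i - 1) else 0)
   else Rz a b $$ (i - 1 - length ds, j - 1 - length ds))"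
        using Cons.prems i0 False by (intro Cons.IH) auto
      also have "\<dots> = (if i < length (d#ds) \<or> j < length (d#ds) then (if i = j then (d#ds) ! i else 0)
   else Rz a b $$ (i - length (d#ds), j - length (d#ds)))"
        using i0 False by (auto simp: nth_Cons')
      finally show ?thesis .
    qed
  qed
qed

lemma det1: "det (mat (Suc 0) (Suc 0) f) = f (0,0)"
proof -
  have "det (mat (Suc 0) (Suc 0) f) = prod_list (diag_mat (mat (Suc 0) (Suc 0) f))"
    by (rule det_upper_triangular) (auto simp: upper_triangular_def)
  then show ?thesis by (simp add: diag_mat_def)
qed

lemma det2: assumes "A \<in> carrier_mat 2 2"
  shows "det A = A$$(0,0)*A$$(1,1) - A$$(0,1)*A$$(1,0)"
proof -
  have "det A = (\<Sum>j<2. A $$ (0,j) * cofactor A 0 j)"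
    by (rule laplace_expansion_row[OF assms]) auto
  also have "\<dots> = A$$(0,0)*A$$(1,1) - A$$(0,1)*A$$(1,0)"
    using assms by (simp add: cofactor_def numeral_2_eq_2 det1 mat_delete_def)
  finally show ?thesis .
qed

lemma char_poly_Rz: "char_poly (Rz a b) = [: a*a + b*b, -2*a, 1 :]"
proof -
  have c: "char_poly_matrix (Rz a b) \<in> carrier_mat 2 2"
    by (simp add: char_poly_matrix_def Rz_def)
  show ?thesis
    unfolding char_poly_def det2[OF c]
    by (simp add: char_poly_matrix_def Rz_def numeral_2_eq_2 mult_pCons_left mult_pCons_right)
qed

lemma char_poly_1: "char_poly (mat 1 1 (\<lambda>_. d)) = [: -d, 1 :]"
proof -
  have "char_poly (mat 1 1 (\<lambda>_. d)) = (\<Prod>a\<leftarrow>diag_mat (mat 1 1 (\<lambda>_. d)). [:- a, 1:])"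
    by (rule char_poly_upper_triangular[of _ 1]) (auto simp: upper_triangular_def)
  then show ?thesis by (simp add: diag_mat_def)
qed

lemma char_poly_Dm: "char_poly (Dm a b ds) = (\<Prod>d\<leftarrow>ds. [: -d, 1 :]) * [: a*a + b*b, -2*a, 1 :]"
proof (induction ds)
  case Nil
  then show ?case by (simp add: char_poly_Rz)
next
  case (Cons d ds)
  have "char_poly (Dm a b (d # ds)) = char_poly (mat 1 1 (\<lambda>_. d)) * char_poly (Dm a b ds)"
    unfolding Dm.simps by (rule char_poly_four_block_zeros_col) (use Dm_carrier[of a b ds] in auto)
  then show ?case using Cons char_poly_1[of d] by (simp only: mult.assoc list.map prod_list.Cons)
qed

lemma Dm_normal: "Dm a b ds * (Dm a b ds)\<^sup>T = (Dm a b ds)\<^sup>T * Dm a b ds"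
proof (induction ds)
  case Nil
  show ?case by (rule eq_matI) (auto simp: Rz_def numeral_2_eq_2 less_Suc_eq scalar_prod_def)
next
  case (Cons d ds)
  have c: "Dm a b ds \<in> carrier_mat (length ds + 2) (length ds + 2)" by (rule Dm_carrier)
  have t: "(mat 1 1 (\<lambda>_. d))\<^sup>T = mat 1 1 (\<lambda>_. d)" by auto
  let ?n = "length ds + 2"
  have A: "mat 1 1 (\<lambda>_. d) \<in> carrier_mat 1 1" by simp
  have At: "(mat 1 1 (\<lambda>_. d))\<^sup>T \<in> carrier_mat 1 1" by simp
  have Z1: "0\<^sub>m 1 ?n \<in> carrier_mat 1 ?n" by simp
  have Z2: "0\<^sub>m ?n 1 \<in> carrier_mat ?n 1" by simp
  have ct: "(Dm a b ds)\<^sup>T \<in> carrier_mat ?n ?n" using c by simp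
  have c': "Dm a b ds \<in> carrier_mat (Suc (Suc (length ds))) (Suc (Suc (length ds)))" using c by simp
  have T: "(Dm a b (d # ds))\<^sup>T = four_block_mat (mat 1 1 (\<lambda>_. d)) (0\<^sub>m 1 ?n) (0\<^sub>m ?n 1) (Dm a b ds)\<^sup>T"
    unfolding Dm.simps transpose_four_block_mat[OF A Z1 Z2 c] using t by simp
  have L: "Dm a b (d # ds) * (Dm a b (d # ds))\<^sup>T = four_block_mat (mat 1 1 (\<lambda>_. d) * mat 1 1 (\<lambda>_. d) + 0\<^sub>m 1 1) (0\<^sub>m 1 ?n) (0\<^sub>m ?n 1) (Dm a b ds * (Dm a b ds)\<^sup>T)"
    apply (subst T) apply (subst Dm.simps(2)) apply (subst mult_four_block_mat[OF A Z1 Z2 c A Z1 Z2 ct]) using c ct by simp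
  have R: "(Dm a b (d # ds))\<^sup>T * Dm a b (d # ds) = four_block_mat (mat 1 1 (\<lambda>_. d) * mat 1 1 (\<lambda>_. d) + 0\<^sub>m 1 1) (0\<^sub>m 1 ?n) (0\<^sub>m ?n 1) ((Dm a b ds)\<^sup>T * Dm a b ds)"
    apply (subst T) apply (subst Dm.simps(2)) apply (subst mult_four_block_mat[OF A Z1 Z2 ct A Z1 Z2 c]) using c ct by simp
  show ?case unfolding L R Cons.IH ..
qed


definition good :: "real \<Rightarrow> real \<Rightarrow> nat \<Rightarrow> real mat \<Rightarrow> real mat \<Rightarrow> real list \<Rightarrow> bool" where
  "good a b k Q P ds \<longleftrightarrow> Q \<in> carrier_mat k k \<and> P \<in> carrier_mat k k \<and> length ds + 2 = k \<and> ds \<noteq> [] \<and>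
     P\<^sup>T * P = 1\<^sub>m k \<and> Q * P = P * Dm a b ds \<and>
     (\<forall>i<k. \<forall>j<k. Q $$ (i,j) \<ge> 0) \<and> (\<forall>i<k. \<forall>j<k. Q $$ (k-1-i, k-1-j) = Q $$ (i,j)) \<and>
     (\<forall>i<k. P $$ (i,0) \<ge> 0 \<and> P $$ (k-1-i,0) = P $$ (i,0))"

lemma revJ_mult: fixes Q :: "real mat" assumes Q: "Q \<in> carrier_mat k k"
  shows "rev_id_mat k * Q * rev_id_mat k = mat k k (\<lambda>(i,j). Q $$ (k-1-i, k-1-j))"
proof (rule eq_matI)
  fix i j assume "i < dim_row (mat k k (\<lambda>(i,j). Q $$ (k-1-i, k-1-j)))" "j < dim_col (mat k k (\<lambda>(i,j). Q $$ (k-1-i, k-1-j)))"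
  then have i: "i < k" and j: "j < k" by auto
  have 1: "(rev_id_mat k * Q) $$ (i,l) = Q $$ (k-1-i, l)" if l: "l < k" for l
  proof -
    have "(rev_id_mat k * Q) $$ (i,l) = (\<Sum>m\<in>{0..<k}. (if i + m + 1 = k then 1 else 0) * Q $$ (m,l))"
      using i l Q by (simp add: rev_id_mat_def scalar_prod_def)
    also have "\<dots> = (\<Sum>m\<in>{0..<k}. if m = k-1-i then Q $$ (m,l) else 0)"
      by (rule sum.cong) (use i in auto)
    also have "\<dots> = Q $$ (k-1-i, l)" using i by simp
    finally show ?thesis .
  qed
  have "(rev_id_mat k * Q * rev_id_mat k) $$ (i,j) = (\<Sum>m\<in>{0..<k}. (rev_id_mat k * Q) $$ (i,m) * (if m + j + 1 = k then 1 else 0))"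
    using i j Q by (simp add: rev_id_mat_def scalar_prod_def)
  also have "\<dots> = (\<Sum>m\<in>{0..<k}. if m = k-1-j then Q $$ (k-1-i,m) else 0)"
    by (rule sum.cong) (use j 1 in auto)
  also have "\<dots> = Q $$ (k-1-i, k-1-j)" using j by simp
  finally show "(rev_id_mat k * Q * rev_id_mat k) $$ (i,j) = mat k k (\<lambda>(i,j). Q $$ (k-1-i, k-1-j)) $$ (i,j)"
    using i j by simp
qed (use Q in \<open>auto simp: rev_id_mat_def\<close>)

lemma adjoint_real: assumes Q: "Q \<in> carrier_mat k k"
  shows "mat_adjoint (map_mat complex_of_real Q) = map_mat complex_of_real (Q\<^sup>T)"
  by (rule eq_matI) (use Q in \<open>auto simp: mat_adjoint_def mat_of_rows_def\<close>)

lemma good_final: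
  assumes g: "good a b k Q P ds"
  shows "Q \<in> carrier_mat k k \<and> normal_mat Q \<and> centrosymmetric Q \<and> nonneg_mat Q \<and>
    char_poly (map_mat complex_of_real Q) = (\<Prod>d\<leftarrow>ds. [: - complex_of_real d, 1 :]) *
       ([: - Complex a b, 1:] * [: - cnj (Complex a b), 1 :])"
proof -
  let ?D = "Dm a b ds"
  have Q: "Q \<in> carrier_mat k k" and P: "P \<in> carrier_mat k k" and len: "length ds + 2 = k"
    and PP: "P\<^sup>T * P = 1\<^sub>m k" and QP: "Q * P = P * ?D"
    and nn: "\<forall>i<k. \<forall>j<k. Q $$ (i,j) \<ge> 0" and cs: "\<forall>i<k. \<forall>j<k. Q $$ (k-1-i, k-1-j) = Q $$ (i,j)"
    using g unfolding good_def by auto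
  have D: "?D \<in> carrier_mat k k" using Dm_carrier[of a b ds] len by simp
  have PT: "P\<^sup>T \<in> carrier_mat k k" using P by simp
  have PP2: "P * P\<^sup>T = 1\<^sub>m k" by (rule mat_mult_left_right_inverse[OF PT P PP])
  have QPDP: "Q = P * ?D * P\<^sup>T"
  proof -
    have "Q = Q * (P * P\<^sup>T)" using PP2 Q by simp
    also have "\<dots> = (Q * P) * P\<^sup>T" using Q P PT by (simp add: assoc_mult_mat)
    finally show ?thesis using QP by simp
  qed
  have sim: "similar_mat Q ?D"
    unfolding similar_mat_def similar_mat_wit_def
    by (rule exI[of _ P], rule exI[of _ "P\<^sup>T"]) (use Q P D PP PP2 QPDP in auto)
  have cp: "char_poly Q = char_poly ?D" by (rule char_poly_similar[OF sim])
  have cpc: "char_poly (map_mat complex_of_real Q) = map_poly complex_of_real (char_poly Q)"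
    by (rule of_real_hom.char_poly_hom[OF Q])
  have mp: "map_poly complex_of_real ((\<Prod>d\<leftarrow>ds. [: -d, 1 :]) * [: a*a + b*b, -2*a, 1 :]) =
     (\<Prod>d\<leftarrow>ds. [: - complex_of_real d, 1 :]) * ([: - Complex a b, 1:] * [: - cnj (Complex a b), 1 :])"
  proof -
    interpret mp: map_poly_comm_ring_hom complex_of_real ..
    have 1: "map_poly complex_of_real (\<Prod>d\<leftarrow>ds. [: -d, 1 :]) = (\<Prod>d\<leftarrow>ds. [: - complex_of_real d, 1 :])"
    proof (induction ds)
      case (Cons d ds)
      have "map_poly complex_of_real (\<Prod>d\<leftarrow>d#ds. [: -d, 1 :]) = map_poly complex_of_real [: -d, 1 :] * map_poly complex_of_real (\<Prod>d\<leftarrow>ds. [: -d, 1 :])"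
        by (simp only: list.map prod_list.Cons mp.hom_mult)
      then show ?case using Cons by simp
    qed simp
    have 2: "map_poly complex_of_real [: a*a + b*b, -2*a, 1 :] = [: - Complex a b, 1:] * [: - cnj (Complex a b), 1 :]"
      by (simp add: complex_eq_iff hom_distribs)
    show ?thesis using 1 2 by (simp only: mp.hom_mult)
  qed
  have cpfin: "char_poly (map_mat complex_of_real Q) = (\<Prod>d\<leftarrow>ds. [: - complex_of_real d, 1 :]) *
       ([: - Complex a b, 1:] * [: - cnj (Complex a b), 1 :])"
    using cpc cp mp by (simp add: char_poly_Dm)
  have QT: "Q\<^sup>T = P * ?D\<^sup>T * P\<^sup>T"
  proof -
    have "Q\<^sup>T = (P * ?D * P\<^sup>T)\<^sup>T" using QPDP by simp
    also have "\<dots> = (P\<^sup>T)\<^sup>T * (P * ?D)\<^sup>T" by (rule transpose_mult[of _ k k]) (use P D in auto)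
    also have "(P * ?D)\<^sup>T = ?D\<^sup>T * P\<^sup>T" by (rule transpose_mult[of _ k k]) (use P D in auto)
    finally show ?thesis using P D by (simp add: assoc_mult_mat[of _ k k _ k _ k])
  qed
  have rnorm: "Q * Q\<^sup>T = Q\<^sup>T * Q"
  proof -
    have DT: "?D\<^sup>T \<in> carrier_mat k k" using D by simp
    have e1: "Q * Q\<^sup>T = (P * ?D * P\<^sup>T) * (P * ?D\<^sup>T * P\<^sup>T)" using QPDP QT by metis
    have e2: "Q\<^sup>T * Q = (P * ?D\<^sup>T * P\<^sup>T) * (P * ?D * P\<^sup>T)" using QPDP QT by metis
    have "(P * ?D * P\<^sup>T) * (P * ?D\<^sup>T * P\<^sup>T) = P * ?D * (P\<^sup>T * P) * ?D\<^sup>T * P\<^sup>T"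
      using P D DT PT by (simp add: assoc_mult_mat[of _ k k _ k _ k])
    also have "\<dots> = P * (?D * ?D\<^sup>T) * P\<^sup>T" using P D DT PT PP by (simp add: assoc_mult_mat[of _ k k _ k _ k])
    also have "\<dots> = P * (?D\<^sup>T * ?D) * P\<^sup>T" using Dm_normal by simp
    also have "\<dots> = P * ?D\<^sup>T * (P\<^sup>T * P) * ?D * P\<^sup>T" using P D DT PT PP by (simp add: assoc_mult_mat[of _ k k _ k _ k])
    also have "\<dots> = (P * ?D\<^sup>T * P\<^sup>T) * (P * ?D * P\<^sup>T)"
      using P D DT PT by (simp add: assoc_mult_mat[of _ k k _ k _ k])
    finally show ?thesis using e1 e2 by simp
  qed
  have normal: "normal_mat Q"
    unfolding normal_mat_def Let_def adjoint_real[OF Q]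
    using rnorm Q by (simp add: of_real_hom.mat_hom_mult[symmetric, of _ k k _ k])
  have centro: "centrosymmetric Q"
    unfolding centrosymmetric_def using Q cs by (auto simp: revJ_mult[OF Q])
  have "nonneg_mat Q" unfolding nonneg_mat_def using nn Q by auto
  then show ?thesis using Q normal centro cpfin by auto
qed



lemma step_params:
  fixes al la lb :: real
  assumes al: "al \<ge> 0" and la: "la < 0" and lb: "lb < 0"
  shows "\<exists>c s sg. c \<ge> 0 \<and> s \<ge> 0 \<and> sg \<ge> 0 \<and> c*c + s*s = 1 \<and>
     (-la)*c + sg*s = (al - la - lb)*c \<and> sg*c + al*s = (al - la - lb)*s \<and>
     sg*c - (-la)*s = -lb*s \<and> al*c - sg*s = lb*c"
proof -
  define g where "g = -la"
  define a' where "a' = al - la - lb"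
  define d where "d = a' - lb"
  have d: "d > 0" using al la lb by (simp add: d_def a'_def)
  define c where "c = sqrt ((g - lb)/d)"
  define s where "s = sqrt ((a' - g)/d)"
  have c2: "c*c = (g - lb)/d" unfolding c_def using d la lb by (simp add: g_def)
  have s2: "s*s = (a' - g)/d" unfolding s_def using d al lb by (simp add: g_def a'_def)
  define sg where "sg = d*c*s"
  have "c*c + s*s = ((g - lb) + (a' - g))/d" using d by (simp add: c2 s2 field_simps)
  then have e0: "c*c + s*s = 1" using d by (simp add: d_def)
  have ds: "d*(s*s) = a' - g" using s2 d by simp
  have dc: "d*(c*c) = g - lb" using c2 d by simp
  have "sg * s = c * (d*(s*s))" unfolding sg_def by (simp add: mult_ac)
  then have css: "sg * s = c * (a' - g)" using ds by simp
  have "sg * c = s * (d*(c*c))" unfolding sg_def by (simp add: mult_ac)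
  then have csc: "sg * c = s * (g - lb)" using dc by simp
  have e1: "g*c + sg*s = a'*c" using css by (simp add: algebra_simps)
  have e2: "sg*c + al*s = a'*s" using csc by (simp add: algebra_simps g_def a'_def)
  have e3: "sg*c - g*s = -lb*s" using csc by (simp add: algebra_simps)
  have e4: "al*c - sg*s = lb*c" using css by (simp add: algebra_simps g_def a'_def)
  have "(g - lb)/d \<ge> 0" "(a' - g)/d \<ge> 0" using d al la lb by (simp_all add: g_def a'_def)
  then have "c \<ge> 0" "s \<ge> 0" unfolding c_def s_def by auto
  moreover have "sg \<ge> 0" unfolding sg_def using d \<open>c \<ge> 0\<close> \<open>s \<ge> 0\<close> by simp
  ultimately show ?thesis using e0 e1 e2 e3 e4 unfolding g_def a'_def by blast
qed

lemma mult_entry: "A \<in> carrier_mat n m \<Longrightarrow> B \<in> carrier_mat m p \<Longrightarrow> i < n \<Longrightarrow> j < p \<Longrightarrow>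
  (A*B)$$(i,j) = (\<Sum>l<m. A$$(i,l) * B$$(l,j))"
  by (simp add: scalar_prod_def atLeast0LessThan)

lemma sum_split_ends: fixes k :: nat shows "(\<Sum>l<k+2. f l) = f 0 + f (k+1) + (\<Sum>l<k. f (Suc l))"
proof -
  have "(\<Sum>l<k+2. f l) = (\<Sum>l<Suc k. f l) + f (Suc k)" by simp
  also have "(\<Sum>l<Suc k. f l) = f 0 + (\<Sum>l<k. f (Suc l))" by (rule sum.lessThan_Suc_shift)
  finally show ?thesis by (simp add: add_ac)
qed

lemma sum_split_2: fixes k :: nat shows "(\<Sum>l<k+2. f l) = f 0 + f 1 + (\<Sum>l<k. f (l+2))"
proof -
  have "(\<Sum>l<Suc (Suc k). f l) = f 0 + (\<Sum>l<Suc k. f (Suc l))" by (rule sum.lessThan_Suc_shift)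
  also have "(\<Sum>l<Suc k. f (Suc l)) = f 1 + (\<Sum>l<k. f (Suc (Suc l)))" by (subst sum.lessThan_Suc_shift) simp
  finally show ?thesis by (simp add: add.assoc)
qed



declare Dm.simps(2)[simp del]

lemma step:
  assumes g: "good a b k Q P (al # ds)" and al: "al \<ge> 0" and la: "la < 0" and lb: "lb < 0"
  shows "\<exists>Q' P'. good a b (k+2) Q' P' ((al - la - lb) # la # lb # ds)"
proof -
  obtain c s sg where c: "c \<ge> 0" and s: "s \<ge> 0" and sg: "sg \<ge> 0" and e0: "c*c + s*s = 1"
    and e1: "(-la)*c + sg*s = (al - la - lb)*c" and e2: "sg*c + al*s = (al - la - lb)*s"
    and e3: "sg*c - (-la)*s = -lb*s" and e4: "al*c - sg*s = lb*c"
    using step_params[OF al la lb] by blast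
  define h :: real where "h = sqrt (1/2)"
  have hh: "h*h = 1/2" unfolding h_def by simp
  have h0: "h > 0" unfolding h_def by simp
  have hhx: "h * (h * x) = x / 2" for x using hh by (simp add: mult.assoc[symmetric])
  have nat3: "(i - 2 = j - 2) = (i = j)" if "3 \<le> i" "3 \<le> j" for i j :: nat using that by arith
  define al' where "al' = al - la - lb"
  define gm where "gm = -la"
  define rho where "rho = sg * h"
  have e1': "(-la)*c + sg*s = al'*c" and e2': "sg*c + al*s = al'*s" using e1 e2 by (simp_all add: al'_def)
  define u where "u = (\<lambda>m. P $$ (m,0))"
  define kap where "kap = (\<lambda>i::nat. if i = 0 then s else if i = 1 then 0 else if i = 2 then c else (1::real))"
  define tau where "tau = (\<lambda>i::nat. if i < 3 then 0 else i - 2)"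
  define top where "top = (\<lambda>i::nat. if i = 0 then c*h else if i = 1 then h else if i = 2 then -s*h else 0)"
  define bot where "bot = (\<lambda>i::nat. if i = 0 then c*h else if i = 1 then -h else if i = 2 then -s*h else 0)"
  define P' where "P' = mat (k+2) (k+2) (\<lambda>(i,j). if i = 0 then top j else if i = k+1 then bot j
      else kap j * P $$ (i-1, tau j))"
  define Q' where "Q' = mat (k+2) (k+2) (\<lambda>(i,j). if i = 0 then (if j = 0 then 0 else if j = k+1 then gm else rho * u (j-1))
      else if i = k+1 then (if j = 0 then gm else if j = k+1 then 0 else rho * u (j-1))
      else if j = 0 \<or> j = k+1 then rho * u (i-1) else Q $$ (i-1, j-1))"
  let ?D = "Dm a b (al # ds)"
  let ?D' = "Dm a b (al' # la # lb # ds)"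
  have Q: "Q \<in> carrier_mat k k" and P: "P \<in> carrier_mat k k" and len: "length ds + 3 = k"
    and PP: "P\<^sup>T * P = 1\<^sub>m k" and QP: "Q * P = P * ?D"
    and nn: "\<forall>i<k. \<forall>j<k. Q $$ (i,j) \<ge> 0" and cs: "\<forall>i<k. \<forall>j<k. Q $$ (k-1-i, k-1-j) = Q $$ (i,j)"
    and pu: "\<forall>i<k. P $$ (i,0) \<ge> 0 \<and> P $$ (k-1-i,0) = P $$ (i,0)"
    using g unfolding good_def by auto
  have len1: "length (al # ds) + 2 = k" and len2: "length (al' # la # lb # ds) + 2 = k + 2" using len by auto
  have Dc: "?D \<in> carrier_mat k k" using Dm_carrier[of a b "al # ds"] unfolding len1 .
  have D'c: "?D' \<in> carrier_mat (k+2) (k+2)" using Dm_carrier[of a b "al' # la # lb # ds"] unfolding len2 .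
  have D0: "?D $$ (l,0) = (if l = 0 then al else 0)" if "l < k" for l
    using that len by (subst Dm_index) auto
  have D0': "?D $$ (0,j) = (if j = 0 then al else 0)" if "j < k" for j
    using that len by (subst Dm_index) auto
  have Dd: "?D' $$ (l,j) = 0" if "l < k+2" "j < k+2" "l \<noteq> j" "l < 3 \<or> j < 3" for l j
    using that len by (subst Dm_index) auto
  have Ddiag: "?D' $$ (0,0) = al'" "?D' $$ (1,1) = la" "?D' $$ (2,2) = lb"
     "?D' $$ (Suc 0, Suc 0) = la" "?D' $$ (Suc (Suc 0), Suc (Suc 0)) = lb"
    using len by (subst Dm_index; simp)+
  have Dd3: "?D' $$ (l,j) = ?D $$ (l-2,j-2)" if "3 \<le> l" "3 \<le> j" "l < k+2" "j < k+2" for l j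
  proof -
    have "\<exists>t. l = Suc (Suc (Suc t))" using \<open>3 \<le> l\<close> by (intro exI[of _ "l - 3"]) simp
    then obtain t where t: "l = Suc (Suc (Suc t))" by blast
    have "\<exists>t. j = Suc (Suc (Suc t))" using \<open>3 \<le> j\<close> by (intro exI[of _ "j - 3"]) simp
    then obtain t' where t': "j = Suc (Suc (Suc t'))" by blast
    show ?thesis using that len t t' by (simp add: Dm_index)
  qed
  have orth: "(\<Sum>m<k. P $$ (m,i) * P $$ (m,j)) = (if i = j then 1 else 0)" if "i < k" "j < k" for i j
  proof -
    have "(P\<^sup>T * P) $$ (i,j) = (\<Sum>m<k. P\<^sup>T $$ (i,m) * P $$ (m,j))"
      by (rule mult_entry[of _ k k _ k]) (use P that in auto)
    also have "\<dots> = (\<Sum>m<k. P $$ (m,i) * P $$ (m,j))"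
      by (rule sum.cong) (use P that in auto)
    finally show ?thesis using PP that by simp
  qed
  have QPe: "(\<Sum>l<k. Q $$ (i,l) * P $$ (l,j)) = (\<Sum>l<k. P $$ (i,l) * ?D $$ (l,j))" if "i < k" "j < k" for i j
    using mult_entry[OF Q P that] mult_entry[OF P Dc that] QP by simp
  have PD0: "(\<Sum>l<k. P $$ (i,l) * ?D $$ (l,0)) = u i * al" if "i < k" for i
  proof -
    have "(\<Sum>l<k. P $$ (i,l) * ?D $$ (l,0)) = (\<Sum>l<k. if l = 0 then P $$ (i,0) * al else 0)"
      by (rule sum.cong) (auto simp: D0)
    also have "\<dots> = u i * al" using len by (simp add: u_def)
    finally show ?thesis .
  qed
  have tau_lt: "tau i < k" if "i < k+2" for i using that len unfolding tau_def by auto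
  have Sorth: "(\<Sum>m<k. (kap i * P $$ (m, tau i)) * (kap j * P $$ (m, tau j))) =
      kap i * kap j * (if tau i = tau j then 1 else 0)" if "i < k+2" "j < k+2" for i j
  proof -
    have "(\<Sum>m<k. (kap i * P $$ (m, tau i)) * (kap j * P $$ (m, tau j))) =
       (\<Sum>m<k. (kap i * kap j) * (P $$ (m, tau i) * P $$ (m, tau j)))"
      by (rule sum.cong) (auto simp: algebra_simps)
    also have "\<dots> = kap i * kap j * (\<Sum>m<k. P $$ (m, tau i) * P $$ (m, tau j))"
      by (simp add: sum_distrib_left)
    finally show ?thesis using orth[OF tau_lt[OF that(1)] tau_lt[OF that(2)]] by simp
  qed
  have Su: "(\<Sum>m<k. u m * (kap j * P $$ (m, tau j))) = kap j * (if tau j = 0 then 1 else 0)"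
    if "j < k+2" for j
  proof -
    have "(\<Sum>m<k. u m * (kap j * P $$ (m, tau j))) = (\<Sum>m<k. kap j * (P $$ (m, 0) * P $$ (m, tau j)))"
      by (rule sum.cong) (auto simp: algebra_simps u_def)
    also have "\<dots> = kap j * (\<Sum>m<k. P $$ (m, 0) * P $$ (m, tau j))"
      by (simp add: sum_distrib_left)
    finally show ?thesis using orth[OF _ tau_lt[OF that]] len by simp
  qed
  have SQ: "(\<Sum>m<k. Q $$ (m0,m) * (kap j * P $$ (m, tau j))) = kap j * (\<Sum>l<k. P $$ (m0,l) * ?D $$ (l, tau j))"
    if "m0 < k" "j < k+2" for m0 j
  proof -
    have "(\<Sum>m<k. Q $$ (m0,m) * (kap j * P $$ (m, tau j))) = (\<Sum>m<k. kap j * (Q $$ (m0,m) * P $$ (m, tau j)))"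
      by (rule sum.cong) (auto simp: algebra_simps)
    also have "\<dots> = kap j * (\<Sum>m<k. Q $$ (m0,m) * P $$ (m, tau j))"
      by (simp add: sum_distrib_left)
    finally show ?thesis using QPe[OF that(1) tau_lt[OF that(2)]] by simp
  qed
  have P'c: "P' \<in> carrier_mat (k+2) (k+2)" unfolding P'_def by simp
  have Q'c: "Q' \<in> carrier_mat (k+2) (k+2)" unfolding Q'_def by simp
  have P'0: "P' $$ (0,j) = top j" if "j < k+2" for j using that by (simp add: P'_def)
  have P'1: "P' $$ (Suc k,j) = bot j" if "j < k+2" for j using that by (simp add: P'_def)
  have P'm: "P' $$ (Suc m,j) = kap j * P $$ (m, tau j)" if "m < k" "j < k+2" for m j
    using that by (simp add: P'_def)
  have PP': "P'\<^sup>T * P' = 1\<^sub>m (k+2)"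
  proof (rule eq_matI)
    fix i j assume "i < dim_row (1\<^sub>m (k+2) :: real mat)" "j < dim_col (1\<^sub>m (k+2) :: real mat)"
    then have i: "i < k+2" and j: "j < k+2" by auto
    have "(P'\<^sup>T * P') $$ (i,j) = (\<Sum>l<k+2. P'\<^sup>T $$ (i,l) * P' $$ (l,j))"
      by (rule mult_entry[of _ "k+2" "k+2" _ "k+2"]) (use P'c i j in auto)
    also have "\<dots> = (\<Sum>l<k+2. P' $$ (l,i) * P' $$ (l,j))"
      by (rule sum.cong) (use P'c i j in auto)
    also have "\<dots> = top i * top j + bot i * bot j + (\<Sum>m<k. (kap i * P $$ (m, tau i)) * (kap j * P $$ (m, tau j)))"
    proof -
      have "(\<Sum>l<k. P' $$ (Suc l,i) * P' $$ (Suc l,j)) = (\<Sum>m<k. (kap i * P $$ (m, tau i)) * (kap j * P $$ (m, tau j)))"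
        by (rule sum.cong) (use P'm[OF _ i] P'm[OF _ j] in auto)
      then show ?thesis by (subst sum_split_ends) (simp add: P'0[OF i] P'0[OF j] P'1[OF i] P'1[OF j])
    qed
    also have "\<dots> = top i * top j + bot i * bot j + kap i * kap j * (if tau i = tau j then 1 else 0)"
      using Sorth[OF i j] by simp
    also have "\<dots> = (if i = j then 1 else 0)"
    proof -
      have "i = 0 \<or> i = 1 \<or> i = 2 \<or> i \<ge> 3" "j = 0 \<or> j = 1 \<or> j = 2 \<or> j \<ge> 3" by auto
      then show ?thesis
        using e0 by (elim disjE) (simp_all add: top_def bot_def kap_def tau_def algebra_simps hhx nat3)
    qed
    finally show "(P'\<^sup>T * P') $$ (i,j) = 1\<^sub>m (k+2) $$ (i,j)" using i j by simp
  qed (use P'c in auto)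
  have rowD: "(\<Sum>l<k+2. f l * ?D' $$ (l,j)) = f j * ?D' $$ (j,j)"
    if j: "j < k+2" and f: "\<And>l. 3 \<le> l \<Longrightarrow> f l = 0" for f j
  proof -
    have "(\<Sum>l<k+2. f l * ?D' $$ (l,j)) = (\<Sum>l<k+2. if l = j then f j * ?D' $$ (j,j) else 0)"
    proof (rule sum.cong)
      fix l assume l: "l \<in> {..<k+2}"
      show "f l * ?D' $$ (l,j) = (if l = j then f j * ?D' $$ (j,j) else 0)"
      proof (cases "l = j")
        case False
        note lj = False
        show ?thesis
        proof (cases "l < 3 \<or> j < 3")
          case True
          then show ?thesis using Dd[of l j] l j lj by simp
        next
          case False
          then show ?thesis using f[of l] lj by simp
        qed
      qed simp
    qed simp
    also have "\<dots> = f j * ?D' $$ (j,j)" using j by simp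
    finally show ?thesis .
  qed
  have Q'0: "Q' $$ (0,0) = 0" "Q' $$ (0, Suc k) = gm" "Q' $$ (Suc k, 0) = gm" "Q' $$ (Suc k, Suc k) = 0"
    by (simp_all add: Q'_def)
  have Q'r: "Q' $$ (0, Suc m) = rho * u m" "Q' $$ (Suc k, Suc m) = rho * u m" if "m < k" for m
    using that by (simp_all add: Q'_def)
  have Q'm: "Q' $$ (Suc m0, 0) = rho * u m0" "Q' $$ (Suc m0, Suc k) = rho * u m0"
     "Q' $$ (Suc m0, Suc m) = Q $$ (m0, m)" if "m0 < k" "m < k" for m0 m
    using that by (simp_all add: Q'_def)
  have A1: "gm * (c*h) + rho * s = (c*h) * al'"
  proof -
    have "h * ((-la)*c + sg*s) = h * (al'*c)" using e1' by simp
    then show ?thesis unfolding gm_def rho_def by (simp add: algebra_simps)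
  qed
  have A2: "gm * (-h) = h * la" unfolding gm_def by simp
  have A2': "gm * h = (-h) * la" unfolding gm_def by simp
  have A3: "gm * (-s*h) + rho * c = (-s*h) * lb"
  proof -
    have "h * (sg*c - (-la)*s) = h * (-lb*s)" using e3 by simp
    then show ?thesis unfolding gm_def rho_def by (simp add: algebra_simps)
  qed
  have M0: "rho * x * (c*h) + rho * x * (c*h) + s * (x * al) = s * x * al'" for x
  proof -
    have "x * (sg*c + al*s) = x * (al'*s)" using e2' by simp
    then show ?thesis unfolding rho_def by (simp add: algebra_simps hhx)
  qed
  have M2: "rho * x * (-s*h) + rho * x * (-s*h) + c * (x * al) = c * x * lb" for x
  proof -
    have "x * (al*c - sg*s) = x * (lb*c)" using e4 by simp
    then show ?thesis unfolding rho_def by (simp add: algebra_simps hhx)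
  qed
  have QP': "Q' * P' = P' * ?D'"
  proof (rule eq_matI)
    fix i j assume "i < dim_row (P' * ?D')" "j < dim_col (P' * ?D')"
    then have i: "i < k+2" and j: "j < k+2" using P'c D'c by auto
    have L: "(Q' * P') $$ (i,j) = Q' $$ (i,0) * top j + Q' $$ (i, Suc k) * bot j +
        (\<Sum>m<k. Q' $$ (i, Suc m) * (kap j * P $$ (m, tau j)))"
    proof -
      have "(Q' * P') $$ (i,j) = (\<Sum>l<k+2. Q' $$ (i,l) * P' $$ (l,j))"
        by (rule mult_entry[OF Q'c P'c i j])
      also have "\<dots> = Q' $$ (i,0) * P' $$ (0,j) + Q' $$ (i, Suc k) * P' $$ (Suc k,j) +
        (\<Sum>m<k. Q' $$ (i, Suc m) * P' $$ (Suc m,j))"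
        by (subst sum_split_ends) simp
      also have "(\<Sum>m<k. Q' $$ (i, Suc m) * P' $$ (Suc m,j)) = (\<Sum>m<k. Q' $$ (i, Suc m) * (kap j * P $$ (m, tau j)))"
        by (rule sum.cong) (use P'm[OF _ j] in auto)
      finally show ?thesis using P'0[OF j] P'1[OF j] by simp
    qed
    have R: "(P' * ?D') $$ (i,j) = (\<Sum>l<k+2. P' $$ (i,l) * ?D' $$ (l,j))"
      by (rule mult_entry[OF P'c D'c i j])
    have jc: "j = 0 \<or> j = 1 \<or> j = 2 \<or> j \<ge> 3" by auto
    have "i = 0 \<or> i = Suc k \<or> (\<exists>m0. i = Suc m0 \<and> m0 < k)" using i by (cases i) auto
    then consider (top) "i = 0" | (bot) "i = Suc k" | (mid) m0 where "i = Suc m0" "m0 < k"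
      by blast
    then show "(Q' * P') $$ (i,j) = (P' * ?D') $$ (i,j)"
    proof cases
      case top
      have "(\<Sum>m<k. Q' $$ (i, Suc m) * (kap j * P $$ (m, tau j))) = (\<Sum>m<k. rho * (u m * (kap j * P $$ (m, tau j))))"
        by (rule sum.cong) (use Q'r top in auto)
      also have "\<dots> = rho * (kap j * (if tau j = 0 then 1 else 0))" by (simp add: sum_distrib_left[symmetric] Su[OF j])
      finally have L': "(Q' * P') $$ (i,j) = gm * bot j + rho * (kap j * (if tau j = 0 then 1 else 0))"
        using L Q'0 top by simp
      have "(\<Sum>l<k+2. P' $$ (i,l) * ?D' $$ (l,j)) = (\<Sum>l<k+2. top l * ?D' $$ (l,j))"
        by (rule sum.cong) (use P'0 top in auto)
      also have "\<dots> = top j * ?D' $$ (j,j)" by (rule rowD[OF j]) (simp add: top_def)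
      finally have R': "(P' * ?D') $$ (i,j) = top j * ?D' $$ (j,j)" using R by simp
      show ?thesis unfolding L' R' using jc
        apply (elim disjE)
        subgoal using A1 by (simp add: top_def bot_def kap_def tau_def Ddiag)
        subgoal using A2 by (simp add: top_def bot_def kap_def tau_def Ddiag)
        subgoal using A3 by (simp add: top_def bot_def kap_def tau_def Ddiag)
        subgoal by (simp add: top_def bot_def tau_def)
        done
    next
      case bot
      have "(\<Sum>m<k. Q' $$ (i, Suc m) * (kap j * P $$ (m, tau j))) = (\<Sum>m<k. rho * (u m * (kap j * P $$ (m, tau j))))"
        by (rule sum.cong) (use Q'r bot in auto)
      also have "\<dots> = rho * (kap j * (if tau j = 0 then 1 else 0))" by (simp add: sum_distrib_left[symmetric] Su[OF j])
      finally have L': "(Q' * P') $$ (i,j) = gm * top j + rho * (kap j * (if tau j = 0 then 1 else 0))"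
        using L Q'0 bot by simp
      have "(\<Sum>l<k+2. P' $$ (i,l) * ?D' $$ (l,j)) = (\<Sum>l<k+2. bot l * ?D' $$ (l,j))"
        by (rule sum.cong) (use P'1 bot in auto)
      also have "\<dots> = bot j * ?D' $$ (j,j)" by (rule rowD[OF j]) (simp add: bot_def)
      finally have R': "(P' * ?D') $$ (i,j) = bot j * ?D' $$ (j,j)" using R by simp
      show ?thesis unfolding L' R' using jc
        apply (elim disjE)
        subgoal using A1 by (simp add: top_def bot_def kap_def tau_def Ddiag)
        subgoal using A2' by (simp add: top_def bot_def kap_def tau_def Ddiag)
        subgoal using A3 by (simp add: top_def bot_def kap_def tau_def Ddiag)
        subgoal by (simp add: top_def bot_def tau_def)
        done
    next
      case mid
      have "(\<Sum>m<k. Q' $$ (i, Suc m) * (kap j * P $$ (m, tau j))) = (\<Sum>m<k. Q $$ (m0,m) * (kap j * P $$ (m, tau j)))"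
        by (rule sum.cong) (use Q'm mid in auto)
      also have "\<dots> = kap j * (\<Sum>l<k. P $$ (m0,l) * ?D $$ (l, tau j))" by (rule SQ[OF mid(2) j])
      finally have L': "(Q' * P') $$ (i,j) = rho * u m0 * top j + rho * u m0 * bot j + kap j * (\<Sum>l<k. P $$ (m0,l) * ?D $$ (l, tau j))"
        using L Q'm[OF mid(2)] mid by simp
      define f1 where "f1 = (\<lambda>l. if l < 3 then kap l * u m0 else 0)"
      define f2 where "f2 = (\<lambda>l. if l < 3 then 0 else P $$ (m0, l - 2))"
      have "(\<Sum>l<k+2. P' $$ (i,l) * ?D' $$ (l,j)) = (\<Sum>l<k+2. f1 l * ?D' $$ (l,j) + f2 l * ?D' $$ (l,j))"
      proof (rule sum.cong)
        fix l assume l: "l \<in> {..<k+2}"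
        have "P' $$ (i,l) = f1 l + f2 l" using P'm[OF mid(2), of l] l mid
          by (auto simp: f1_def f2_def kap_def tau_def u_def)
        then show "P' $$ (i,l) * ?D' $$ (l,j) = f1 l * ?D' $$ (l,j) + f2 l * ?D' $$ (l,j)"
          by (simp add: algebra_simps)
      qed simp
      also have "\<dots> = (\<Sum>l<k+2. f1 l * ?D' $$ (l,j)) + (\<Sum>l<k+2. f2 l * ?D' $$ (l,j))"
        by (rule sum.distrib)
      also have "(\<Sum>l<k+2. f1 l * ?D' $$ (l,j)) = f1 j * ?D' $$ (j,j)"
        by (rule rowD[OF j]) (simp add: f1_def)
      also have "(\<Sum>l<k+2. f2 l * ?D' $$ (l,j)) = (\<Sum>t<k. f2 (t+2) * ?D' $$ (t+2,j))"
        by (subst sum_split_2) (simp add: f2_def)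
      also have "\<dots> = (if j < 3 then 0 else (\<Sum>t<k. P $$ (m0,t) * ?D $$ (t, j - 2)))"
      proof (cases "j < 3")
        case True
        have "(\<Sum>t<k. f2 (t+2) * ?D' $$ (t+2,j)) = (\<Sum>t<k. 0)"
        proof (rule sum.cong)
          fix t assume t: "t \<in> {..<k}"
          show "f2 (t+2) * ?D' $$ (t+2,j) = 0"
          proof (cases "t = 0")
            case False
            then show ?thesis using Dd[of "t+2" j] t j True by simp
          qed (simp add: f2_def)
        qed simp
        then show ?thesis using True by simp
      next
        case False
        have "(\<Sum>t<k. f2 (t+2) * ?D' $$ (t+2,j)) = (\<Sum>t<k. P $$ (m0,t) * ?D $$ (t, j - 2))"
        proof (rule sum.cong)
          fix t assume t: "t \<in> {..<k}"
          show "f2 (t+2) * ?D' $$ (t+2,j) = P $$ (m0,t) * ?D $$ (t, j - 2)"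
          proof (cases "t = 0")
            case True
            then show ?thesis using D0'[of "j-2"] False j by (simp add: f2_def)
          next
            case False
            then show ?thesis using Dd3[of "t+2" j] t j \<open>\<not> j < 3\<close> by (simp add: f2_def)
          qed
        qed simp
        then show ?thesis using False by simp
      qed
      finally have R': "(P' * ?D') $$ (i,j) = f1 j * ?D' $$ (j,j) + (if j < 3 then 0 else (\<Sum>t<k. P $$ (m0,t) * ?D $$ (t, j - 2)))"
        using R by simp
      show ?thesis unfolding L' R' using jc
        apply (elim disjE)
        subgoal using M0[of "u m0"] PD0[OF mid(2)] by (simp add: top_def bot_def kap_def tau_def f1_def Ddiag)
        subgoal by (simp add: top_def bot_def kap_def tau_def f1_def Ddiag)
        subgoal using M2[of "u m0"] PD0[OF mid(2)] by (simp add: top_def bot_def kap_def tau_def f1_def Ddiag)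
        subgoal by (simp add: top_def bot_def tau_def kap_def f1_def)
        done
    qed
  qed (use P'c D'c Q'c in auto)
  have rho0: "rho \<ge> 0" unfolding rho_def using sg h0 by simp
  have gm0: "gm \<ge> 0" unfolding gm_def using la by simp
  have u0: "u m \<ge> 0" "u (k - 1 - m) = u m" if "m < k" for m using pu that by (auto simp: u_def)
  have nn': "\<forall>i<k+2. \<forall>j<k+2. Q' $$ (i,j) \<ge> 0"
  proof (intro allI impI)
    fix i j assume i: "i < k+2" and j: "j < k+2"
    show "Q' $$ (i,j) \<ge> 0"
    proof (cases "i = 0 \<or> i = k+1 \<or> j = 0 \<or> j = k+1")
      case True
      then show ?thesis using i j rho0 gm0 u0 by (auto simp: Q'_def)
    next
      case False
      then show ?thesis using i j nn by (auto simp: Q'_def)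
    qed
  qed
  have idx: "k + 2 - 1 - Suc m = Suc (k - 1 - m)" if "m < k" for m using that by simp
  have kne: "k - Suc m \<noteq> k" if "m < k" for m using that by auto
  have cs': "\<forall>i<k+2. \<forall>j<k+2. Q' $$ (k+2-1-i, k+2-1-j) = Q' $$ (i,j)"
  proof (intro allI impI)
    fix i j assume i: "i < k+2" and j: "j < k+2"
    have ci: "i = 0 \<or> i = Suc k \<or> (\<exists>m0. i = Suc m0 \<and> m0 < k)" using i by (cases i) auto
    have cj: "j = 0 \<or> j = Suc k \<or> (\<exists>m0. j = Suc m0 \<and> m0 < k)" using j by (cases j) auto
    show "Q' $$ (k+2-1-i, k+2-1-j) = Q' $$ (i,j)"
      using ci cj
    proof (elim disjE exE conjE)
      fix m0 m1 assume "i = Suc m0" "m0 < k" "j = Suc m1" "m1 < k"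
      moreover have "k - Suc m1 \<noteq> k" "k - Suc m0 \<noteq> k" using \<open>m0 < k\<close> \<open>m1 < k\<close> by auto
      ultimately show ?thesis using idx cs by (simp add: Q'_def)
    qed (use idx u0 kne in \<open>simp_all add: Q'_def\<close>)
  qed
  have pu': "\<forall>i<k+2. P' $$ (i,0) \<ge> 0 \<and> P' $$ (k+2-1-i,0) = P' $$ (i,0)"
  proof (intro allI impI)
    fix i assume i: "i < k+2"
    have ci: "i = 0 \<or> i = Suc k \<or> (\<exists>m0. i = Suc m0 \<and> m0 < k)" using i by (cases i) auto
    show "P' $$ (i,0) \<ge> 0 \<and> P' $$ (k+2-1-i,0) = P' $$ (i,0)"
      using ci
    proof (elim disjE exE conjE)
      fix m0 assume "i = Suc m0" "m0 < k"
      then show ?thesis using idx u0 s by (simp add: P'_def top_def bot_def kap_def tau_def u_def)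
    qed (use c h0 in \<open>simp_all add: P'_def top_def bot_def\<close>)
  qed
  show ?thesis
    unfolding good_def
    by (intro exI[of _ Q'] exI[of _ P']) (use Q'c P'c len PP' QP' nn' cs' pu' in \<open>simp add: al'_def\<close>)
qed



lemma sum4: "(\<Sum>l<(4::nat). f l) = f 0 + f 1 + f 2 + (f 3 :: real)"
  by (simp add: numeral_eq_Suc)

lemma less4: "(i::nat) < 4 \<longleftrightarrow> i = 0 \<or> i = 1 \<or> i = 2 \<or> i = 3" by auto

definition sv :: "nat \<Rightarrow> real" where "sv i = (if i = 0 \<or> i = 3 then 1 else -1)"
definition st0 :: "nat \<Rightarrow> real" where "st0 i = (if i < 2 then 1 else -1)"
definition st1 :: "nat \<Rightarrow> real" where "st1 i = (if i = 0 \<or> i = 2 then 1 else -1)"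

definition P4 :: "real mat" where
  "P4 = mat 4 4 (\<lambda>(i,j). (if j = 0 then 1 else if j = 1 then sv i else if j = 2 then st0 i else st1 i) / 2)"
definition Q4 :: "real \<Rightarrow> real \<Rightarrow> real \<Rightarrow> real \<Rightarrow> real mat" where
  "Q4 al lam a b = mat 4 4 (\<lambda>(i,j). al/4 + lam * sv i * sv j / 4 + a * (st0 i * st0 j + st1 i * st1 j) / 4
      + b * (st0 i * st1 j - st1 i * st0 j) / 4)"

lemma D4_entries: "Dm a b [al, lam] $$ (i,j) = (if i = 0 \<and> j = 0 then al else if i = 1 \<and> j = 1 then lam
   else if i = 2 \<and> j = 2 then a else if i = 3 \<and> j = 3 then a else if i = 2 \<and> j = 3 then b
   else if i = 3 \<and> j = 2 then -b else 0)" if "i < 4" "j < 4"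
  using that by (subst Dm_index) (auto simp: Rz_def less4)

lemma base4:
  assumes h1: "al + lam \<ge> 2 * \<bar>a\<bar>" and h2: "al - lam \<ge> 2 * \<bar>b\<bar>"
  shows "good a b 4 (Q4 al lam a b) P4 [al, lam]"
proof -
  have Pc: "P4 \<in> carrier_mat 4 4" by (simp add: P4_def)
  have Qc: "Q4 al lam a b \<in> carrier_mat 4 4" by (simp add: Q4_def)
  have l4: "length [al, lam] + 2 = 4" by simp
  have Dc: "Dm a b [al, lam] \<in> carrier_mat 4 4" using Dm_carrier[of a b "[al,lam]"] unfolding l4 .
  have PP: "P4\<^sup>T * P4 = 1\<^sub>m 4"
  proof (rule eq_matI)
    fix i j assume "i < dim_row (1\<^sub>m 4 :: real mat)" "j < dim_col (1\<^sub>m 4 :: real mat)"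
    then have i: "i < 4" and j: "j < 4" by auto
    have "(P4\<^sup>T * P4) $$ (i,j) = (\<Sum>l<4. P4\<^sup>T $$ (i,l) * P4 $$ (l,j))"
      by (rule mult_entry[of _ 4 4 _ 4]) (use Pc i j in auto)
    also have "\<dots> = (\<Sum>l<4. P4 $$ (l,i) * P4 $$ (l,j))"
      by (rule sum.cong) (use Pc i j in auto)
    also have "\<dots> = 1\<^sub>m 4 $$ (i,j)"
      using i j unfolding sum4 less4 by (elim disjE) (simp_all add: P4_def sv_def st0_def st1_def)
    finally show "(P4\<^sup>T * P4) $$ (i,j) = 1\<^sub>m 4 $$ (i,j)" .
  qed (use Pc in auto)
  have QP: "Q4 al lam a b * P4 = P4 * Dm a b [al, lam]"
  proof (rule eq_matI)
    fix i j assume "i < dim_row (P4 * Dm a b [al, lam])" "j < dim_col (P4 * Dm a b [al, lam])"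
    then have i: "i < 4" and j: "j < 4" using Pc Dc by auto
    have "(Q4 al lam a b * P4) $$ (i,j) = (\<Sum>l<4. Q4 al lam a b $$ (i,l) * P4 $$ (l,j))"
      by (rule mult_entry[OF Qc Pc i j])
    also have "\<dots> = (\<Sum>l<4. P4 $$ (i,l) * Dm a b [al, lam] $$ (l,j))"
      using i j unfolding sum4 less4
      by (elim disjE) (simp_all add: P4_def Q4_def sv_def st0_def st1_def D4_entries field_simps)
    also have "\<dots> = (P4 * Dm a b [al, lam]) $$ (i,j)"
      by (rule mult_entry[OF Pc Dc i j, symmetric])
    finally show "(Q4 al lam a b * P4) $$ (i,j) = (P4 * Dm a b [al, lam]) $$ (i,j)" .
  qed (use Pc Dc Qc in auto)
  have ha: "al + lam \<ge> 2*a" "al + lam \<ge> -2*a" "al - lam \<ge> 2*b" "al - lam \<ge> -2*b"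
    using h1 h2 by (auto simp: abs_le_iff)
  have nn: "\<forall>i<4. \<forall>j<4. Q4 al lam a b $$ (i,j) \<ge> 0"
    unfolding less4 using ha by (auto simp: Q4_def sv_def st0_def st1_def field_simps)
  have cs: "\<forall>i<4. \<forall>j<4. Q4 al lam a b $$ (4-1-i, 4-1-j) = Q4 al lam a b $$ (i,j)"
    unfolding less4 by (auto simp: Q4_def sv_def st0_def st1_def field_simps)
  have pu: "\<forall>i<4. P4 $$ (i,0) \<ge> 0 \<and> P4 $$ (4-1-i,0) = P4 $$ (i,0)"
    unfolding less4 by (auto simp: P4_def)
  show ?thesis unfolding good_def using Pc Qc PP QP nn cs pu by simp
qed



lemma sum5: "(\<Sum>l<(5::nat). f l) = f 0 + f 1 + f 2 + f 3 + (f 4 :: real)"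
  by (simp add: numeral_eq_Suc)

lemma less5: "(i::nat) < 5 \<longleftrightarrow> i = 0 \<or> i = 1 \<or> i = 2 \<or> i = 3 \<or> i = 4" by auto

definition io :: "nat \<Rightarrow> nat" where "io i = (if i < 2 then i else i - 1)"

definition P5 :: "real \<Rightarrow> real \<Rightarrow> real mat" where
  "P5 c s = mat 5 5 (\<lambda>(i,j). if j = 0 then (if i = 2 then s else c/2) else if j = 1 then (if i = 2 then c else -s/2)
     else if i = 2 then 0 else P4 $$ (io i, j - 1))"
definition Q5 :: "real \<Rightarrow> real \<Rightarrow> real \<Rightarrow> real \<Rightarrow> real \<Rightarrow> real mat" where
  "Q5 al lam a b rho = mat 5 5 (\<lambda>(i,j). if i = 2 then (if j = 2 then 0 else rho/2) else if j = 2 then rho/2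
     else Q4 al lam a b $$ (io i, io j))"

lemma D5_entries: "Dm a b [x, y, z] $$ (i,j) = (if i = 0 \<and> j = 0 then x else if i = 1 \<and> j = 1 then y
   else if i = 2 \<and> j = 2 then z else if i = 3 \<and> j = 3 then a else if i = 4 \<and> j = 4 then a else if i = 3 \<and> j = 4 then b
   else if i = 4 \<and> j = 3 then -b else 0)" if "i < 5" "j < 5"
  using that by (subst Dm_index) (auto simp: Rz_def less5)

lemma Q4_tab: "Q4 al lam a b $$ (0,0) = (al+lam)/4 + a/2" "Q4 al lam a b $$ (0,1) = (al-lam)/4 - b/2"
  "Q4 al lam a b $$ (0,2) = (al-lam)/4 + b/2" "Q4 al lam a b $$ (0,3) = (al+lam)/4 - a/2"
  "Q4 al lam a b $$ (1,0) = (al-lam)/4 + b/2" "Q4 al lam a b $$ (1,1) = (al+lam)/4 + a/2"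
  "Q4 al lam a b $$ (1,2) = (al+lam)/4 - a/2" "Q4 al lam a b $$ (1,3) = (al-lam)/4 - b/2"
  "Q4 al lam a b $$ (2,0) = (al-lam)/4 - b/2" "Q4 al lam a b $$ (2,1) = (al+lam)/4 - a/2"
  "Q4 al lam a b $$ (2,2) = (al+lam)/4 + a/2" "Q4 al lam a b $$ (2,3) = (al-lam)/4 + b/2"
  "Q4 al lam a b $$ (3,0) = (al+lam)/4 - a/2" "Q4 al lam a b $$ (3,1) = (al-lam)/4 + b/2"
  "Q4 al lam a b $$ (3,2) = (al-lam)/4 - b/2" "Q4 al lam a b $$ (3,3) = (al+lam)/4 + a/2"
  by (simp_all add: Q4_def sv_def st0_def st1_def field_simps)

lemma P4_tab: "P4 $$ (0,0) = 1/2" "P4 $$ (1,0) = 1/2" "P4 $$ (2,0) = 1/2" "P4 $$ (3,0) = 1/2"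
  "P4 $$ (0,1) = 1/2" "P4 $$ (1,1) = -1/2" "P4 $$ (2,1) = -1/2" "P4 $$ (3,1) = 1/2"
  "P4 $$ (0,2) = 1/2" "P4 $$ (1,2) = 1/2" "P4 $$ (2,2) = -1/2" "P4 $$ (3,2) = -1/2"
  "P4 $$ (0,3) = 1/2" "P4 $$ (1,3) = -1/2" "P4 $$ (2,3) = 1/2" "P4 $$ (3,3) = -1/2"
  by (simp_all add: P4_def sv_def st0_def st1_def)

lemmas P4_tab' = P4_tab[unfolded One_nat_def]
lemmas Q4_tab' = Q4_tab[unfolded One_nat_def]

lemma P5_tab: "P5 c s $$ (i,j) = (if j = 0 then (if i = 2 then s else c/2) else if j = 1 then (if i = 2 then c else -s/2)
     else if i = 2 then 0 else P4 $$ (io i, j - 1))" if "i < 5" "j < 5"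
  using that by (simp add: P5_def)

lemma Q5_tab: "Q5 al lam a b rho $$ (i,j) = (if i = 2 then (if j = 2 then 0 else rho/2) else if j = 2 then rho/2
     else Q4 al lam a b $$ (io i, io j))" if "i < 5" "j < 5"
  using that by (simp add: Q5_def)

lemma base5_params:
  fixes al l1 :: real
  assumes al: "al \<ge> 0" and l1: "l1 < 0"
  shows "\<exists>c s rho. c \<ge> 0 \<and> s \<ge> 0 \<and> rho \<ge> 0 \<and> c*c + s*s = 1 \<and> rho * c = al * s \<and> rho * s = - l1 * c"
proof -
  define d where "d = al - l1"
  have d: "d > 0" using al l1 by (simp add: d_def)
  define c where "c = sqrt (al/d)"
  define s where "s = sqrt (-l1/d)"
  have c2: "c*c = al/d" unfolding c_def using d al by simp
  have s2: "s*s = -l1/d" unfolding s_def using d l1 by simp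
  define rho where "rho = d*c*s"
  have "c*c + s*s = (al + -l1)/d" using d by (simp add: c2 s2 field_simps)
  then have e0: "c*c + s*s = 1" using d by (simp add: d_def)
  have dc: "d*(c*c) = al" using c2 d by simp
  have ds: "d*(s*s) = -l1" using s2 d by simp
  have "rho * c = s * (d*(c*c))" unfolding rho_def by (simp add: mult_ac)
  then have e1: "rho * c = al * s" using dc by simp
  have "rho * s = c * (d*(s*s))" unfolding rho_def by (simp add: mult_ac)
  then have e2: "rho * s = - l1 * c" using ds by simp
  have "al/d \<ge> 0" using d al by simp
  have "-l1/d \<ge> 0" using d l1 by (intro divide_nonneg_pos) auto
  then have "c \<ge> 0" "s \<ge> 0" unfolding c_def s_def using \<open>al/d \<ge> 0\<close> by auto
  moreover have "rho \<ge> 0" unfolding rho_def using d \<open>c \<ge> 0\<close> \<open>s \<ge> 0\<close> by simp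
  ultimately show ?thesis using e0 e1 e2 by blast
qed

lemma base5:
  assumes al: "al \<ge> 0" and l1: "l1 < 0"
    and h1: "al + l1 + lam \<ge> 2 * \<bar>a\<bar>" and h2: "al + l1 - lam \<ge> 2 * \<bar>b\<bar>"
  shows "\<exists>Q P. good a b 5 Q P [al, l1, lam]"
proof -
  obtain c s rho where c: "c \<ge> 0" and s: "s \<ge> 0" and rho: "rho \<ge> 0" and e0: "c*c + s*s = 1"
    and e1: "rho * c = al * s" and e2: "rho * s = - l1 * c"
    using base5_params[OF al l1] by blast
  let ?Q = "Q5 (al + l1) lam a b rho"
  let ?P = "P5 c s"
  let ?D = "Dm a b [al, l1, lam]"
  have Pc: "?P \<in> carrier_mat 5 5" by (simp add: P5_def)
  have Qc: "?Q \<in> carrier_mat 5 5" by (simp add: Q5_def)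
  have l5: "length [al, l1, lam] + 2 = 5" by simp
  have Dc: "?D \<in> carrier_mat 5 5" using Dm_carrier[of a b "[al, l1, lam]"] unfolding l5 .
  have PP: "?P\<^sup>T * ?P = 1\<^sub>m 5"
  proof (rule eq_matI)
    fix i j assume "i < dim_row (1\<^sub>m 5 :: real mat)" "j < dim_col (1\<^sub>m 5 :: real mat)"
    then have i: "i < 5" and j: "j < 5" by auto
    have "(?P\<^sup>T * ?P) $$ (i,j) = (\<Sum>l<5. ?P\<^sup>T $$ (i,l) * ?P $$ (l,j))"
      by (rule mult_entry[of _ 5 5 _ 5]) (use Pc i j in auto)
    also have "\<dots> = (\<Sum>l<5. ?P $$ (l,i) * ?P $$ (l,j))"
      by (rule sum.cong) (use Pc i j in auto)
    also have "\<dots> = 1\<^sub>m 5 $$ (i,j)"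
      using i j e0 unfolding sum5 less5
      by (elim disjE) (simp_all add: P5_tab P4_tab P4_tab' io_def algebra_simps)
    finally show "(?P\<^sup>T * ?P) $$ (i,j) = 1\<^sub>m 5 $$ (i,j)" .
  qed (use Pc in auto)
  have QP: "?Q * ?P = ?P * ?D"
  proof (rule eq_matI)
    fix i j assume "i < dim_row (?P * ?D)" "j < dim_col (?P * ?D)"
    then have i: "i < 5" and j: "j < 5" using Pc Dc by auto
    have "(?Q * ?P) $$ (i,j) = (\<Sum>l<5. ?Q $$ (i,l) * ?P $$ (l,j))"
      by (rule mult_entry[OF Qc Pc i j])
    also have "\<dots> = (\<Sum>l<5. ?P $$ (i,l) * ?D $$ (l,j))"
      using i j e1 e2 unfolding sum5 less5
      apply (elim disjE) apply (simp_all add: P5_tab Q5_tab P4_tab P4_tab' Q4_tab Q4_tab' io_def D5_entries algebra_simps)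
      apply (simp_all add: field_simps) done
    also have "\<dots> = (?P * ?D) $$ (i,j)"
      by (rule mult_entry[OF Pc Dc i j, symmetric])
    finally show "(?Q * ?P) $$ (i,j) = (?P * ?D) $$ (i,j)" .
  qed (use Pc Dc Qc in auto)
  have ha: "al + l1 + lam \<ge> 2*a" "al + l1 + lam \<ge> -2*a" "al + l1 - lam \<ge> 2*b" "al + l1 - lam \<ge> -2*b"
    using h1 h2 by (auto simp: abs_le_iff)
  have g4: "good a b 4 (Q4 (al + l1) lam a b) P4 [al + l1, lam]"
    by (rule base4) (use h1 h2 in auto)
  have nn4: "\<forall>i<4. \<forall>j<4. Q4 (al + l1) lam a b $$ (i,j) \<ge> 0"
   and cs4: "\<forall>i<4. \<forall>j<4. Q4 (al + l1) lam a b $$ (4-1-i, 4-1-j) = Q4 (al + l1) lam a b $$ (i,j)"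
    using g4 unfolding good_def by auto
  have nn: "\<forall>i<5. \<forall>j<5. ?Q $$ (i,j) \<ge> 0"
  proof (intro allI impI)
    fix i j :: nat assume i: "i < 5" and j: "j < 5"
    show "?Q $$ (i,j) \<ge> 0"
      using nn4[rule_format, of "io i" "io j"] rho i j by (auto simp: Q5_tab io_def)
  qed
  have cs: "\<forall>i<5. \<forall>j<5. ?Q $$ (5-1-i, 5-1-j) = ?Q $$ (i,j)"
  proof (intro allI impI)
    fix i j :: nat assume i: "i < 5" and j: "j < 5"
    have io: "io (5-1-i) = 4-1-io i" "io (5-1-j) = 4-1-io j" if "i \<noteq> 2" "j \<noteq> 2"
      using that i j by (auto simp: io_def)
    show "?Q $$ (5-1-i, 5-1-j) = ?Q $$ (i,j)"
    proof (cases "i = 2 \<or> j = 2")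
      case True
      then show ?thesis using i j by (auto simp: Q5_tab)
    next
      case False
      then have n2: "i \<noteq> 2" "j \<noteq> 2" "5-1-i \<noteq> 2" "5-1-j \<noteq> 2" using i j by auto
      have lt: "io i < 4" "io j < 4" using i j n2 by (auto simp: io_def)
      have "?Q $$ (5-1-i, 5-1-j) = Q4 (al + l1) lam a b $$ (io (5-1-i), io (5-1-j))"
        using Q5_tab[of "5-1-i" "5-1-j"] n2 i j by simp
      also have "\<dots> = Q4 (al + l1) lam a b $$ (4-1-io i, 4-1-io j)" using io n2 by simp
      also have "\<dots> = Q4 (al + l1) lam a b $$ (io i, io j)" using cs4 lt by simp
      also have "\<dots> = ?Q $$ (i,j)" using Q5_tab[of i j] n2 i j by simp
      finally show ?thesis .
    qed
  qed
  have pu: "\<forall>i<5. ?P $$ (i,0) \<ge> 0 \<and> ?P $$ (5-1-i,0) = ?P $$ (i,0)"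
    unfolding less5 using c s by (auto simp: P5_tab)
  have "good a b 5 ?Q ?P [al, l1, lam]" unfolding good_def using Pc Qc PP QP nn cs pu by simp
  then show ?thesis by blast
qed



lemma neg_lam:
  fixes lam :: "nat \<Rightarrow> real"
  assumes "0 > lam 1" and "\<And>j. 1 \<le> j \<Longrightarrow> j < n \<Longrightarrow> lam j \<ge> lam (Suc j)"
  shows "1 \<le> j \<Longrightarrow> j \<le> n \<Longrightarrow> lam j < 0"
proof (induction j)
  case 0 then show ?case by simp
next
  case (Suc j)
  show ?case
  proof (cases "j = 0")
    case True then show ?thesis using assms(1) by simp
  next
    case False
    then have "lam j < 0" using Suc by simp
    moreover have "lam j \<ge> lam (Suc j)" using assms(2)[of j] Suc.prems False by simp
    ultimately show ?thesis by simp
  qed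
qed

lemma sum_neg_mono:
  fixes lam :: "nat \<Rightarrow> real"
  assumes neg: "\<forall>j. 1 \<le> j \<longrightarrow> j \<le> n \<longrightarrow> lam j < 0" and M: "M \<le> n"
  shows "(\<Sum>j=1..n. lam j) \<le> (\<Sum>j=1..M. lam j)"
  using assms
proof (induction n)
  case 0 then show ?case by simp
next
  case (Suc n)
  show ?case
  proof (cases "M = Suc n")
    case False
    then have "M \<le> n" using Suc.prems by simp
    then have "(\<Sum>j=1..n. lam j) \<le> (\<Sum>j=1..M. lam j)" using Suc by simp
    moreover have "lam (Suc n) < 0" using Suc.prems by simp
    ultimately show ?thesis by simp
  qed simp
qed

lemma iter:
  fixes lam :: "nat \<Rightarrow> real" and r k0 :: nat
  assumes base: "good a b k0 Q0 P0 ((lam 0 + (\<Sum>j=1..2*r. lam j)) # rest)"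
    and fpos: "\<forall>m\<le>r. lam 0 + (\<Sum>j=1..2*m. lam j) \<ge> 0"
    and neg: "\<forall>j. 1 \<le> j \<longrightarrow> j \<le> 2*r \<longrightarrow> lam j < 0"
  shows "t \<le> r \<Longrightarrow> \<exists>Q P. good a b (k0 + 2*t) Q P
     ((lam 0 + (\<Sum>j=1..2*(r-t). lam j)) # map lam [2*(r-t)+1..<2*r+1] @ rest)"
proof (induction t)
  case 0 then show ?case using base by auto
next
  case (Suc t)
  define s where "s = r - Suc t"
  have rt: "r - t = Suc s" using Suc.prems by (simp add: s_def)
  obtain Q P where g: "good a b (k0 + 2*t) Q P
     ((lam 0 + (\<Sum>j=1..2*Suc s. lam j)) # map lam [2*Suc s+1..<2*r+1] @ rest)"
    using Suc by (auto simp: rt)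
  have sumS: "(\<Sum>j=1..2*Suc s. lam j) = (\<Sum>j=1..2*s. lam j) + lam (2*s+1) + lam (2*s+2)"
    by (simp add: add.assoc)
  have sr: "Suc s \<le> r" using rt by arith
  then have al0: "lam 0 + (\<Sum>j=1..2*Suc s. lam j) \<ge> 0" using fpos by blast
  have sr1: "2*s+1 \<le> 2*r" "2*s+2 \<le> 2*r" "2*s+1 < 2*r+1" "2*s+2 < 2*r+1" using sr by auto
  have la: "lam (2*s+1) < 0" and lb: "lam (2*s+2) < 0" using neg sr1 by auto
  obtain Q' P' where g': "good a b (k0 + 2*t + 2) Q' P'
     ((lam 0 + (\<Sum>j=1..2*Suc s. lam j) - lam (2*s+1) - lam (2*s+2)) # lam (2*s+1) # lam (2*s+2) #
        map lam [2*Suc s+1..<2*r+1] @ rest)"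
    using step[OF g al0 la lb] by blast
  have l: "lam (2*s+1) # lam (2*s+2) # map lam [2*Suc s+1..<2*r+1] = map lam [2*s+1..<2*r+1]"
  proof -
    have "[2*s+1..<2*r+1] = (2*s+1) # (2*s+2) # [2*Suc s+1..<2*r+1]"
      using sr1 by (simp add: upt_conv_Cons)
    then show ?thesis by simp
  qed
  have rs: "r - Suc t = s" by (simp add: s_def)
  have k: "k0 + 2*t + 2 = k0 + 2*Suc t" by simp
  have f: "lam 0 + (\<Sum>j=1..2*Suc s. lam j) - lam (2*s+1) - lam (2*s+2) = lam 0 + (\<Sum>j=1..2*s. lam j)"
    using sumS by simp
  have L: "(lam 0 + (\<Sum>j=1..2*Suc s. lam j) - lam (2*s+1) - lam (2*s+2)) # lam (2*s+1) # lam (2*s+2) #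
        map lam [2*Suc s+1..<2*r+1] @ rest = (lam 0 + (\<Sum>j=1..2*s. lam j)) # map lam [2*s+1..<2*r+1] @ rest"
    using f l by (metis append_Cons)
  from g' have "good a b (k0 + 2*Suc t) Q' P' ((lam 0 + (\<Sum>j=1..2*s. lam j)) # map lam [2*s+1..<2*r+1] @ rest)"
    unfolding L k .
  then show ?case unfolding rs by blast
qed

theorem theorem3p7:
  fixes n :: nat and lam :: "nat \<Rightarrow> real" and a b :: real
  assumes "n \<ge> 1"
    and "lam 0 \<ge> 0" and "0 > lam 1"
    and "\<And>j. 1 \<le> j \<Longrightarrow> j < n \<Longrightarrow> lam j \<ge> lam (Suc j)"
    and "b > 0"
    and "lam 0 + (\<Sum>j=1..n. lam j) - 2 * cmod (Complex a b) \<ge> 0"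
  shows "\<exists>Q :: real mat. Q \<in> carrier_mat (n+3) (n+3) \<and> normal_mat Q \<and>
           centrosymmetric Q \<and> nonneg_mat Q \<and>
           has_eigenvalues Q (map (\<lambda>j. complex_of_real (lam j)) [0..<n+1]
                               @ [Complex a b, cnj (Complex a b)])"
proof -
  have neg: "\<forall>j. 1 \<le> j \<longrightarrow> j \<le> n \<longrightarrow> lam j < 0"
    using neg_lam[of lam n] assms(3,4) by blast
  have ca: "\<bar>a\<bar> \<le> cmod (Complex a b)" and cb: "\<bar>b\<bar> \<le> cmod (Complex a b)"
    using abs_Re_le_cmod[of "Complex a b"] abs_Im_le_cmod[of "Complex a b"] by auto
  have tot: "lam 0 + (\<Sum>j=1..n. lam j) \<ge> 2 * cmod (Complex a b)" using assms(6) by simp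
  have fmono: "lam 0 + (\<Sum>j=1..M. lam j) \<ge> 2 * cmod (Complex a b)" if "M \<le> n" for M
    using sum_neg_mono[OF neg that] tot by simp
  have cm0: "cmod (Complex a b) \<ge> 0" by simp
  have ex: "\<exists>Q P. good a b (n+3) Q P (map lam [0..<n+1])"
  proof (cases "odd n")
    case True
    then obtain r where nr: "n = 2*r+1" by (metis oddE)
    have fpos: "\<forall>m\<le>r. lam 0 + (\<Sum>j=1..2*m. lam j) \<ge> 0"
    proof (intro allI impI)
      fix m assume "m \<le> r"
      then have "2*m \<le> n" using nr by simp
      then show "lam 0 + (\<Sum>j=1..2*m. lam j) \<ge> 0" using fmono[of "2*m"] norm_ge_zero[of "Complex a b"] by linarith
    qed
    have neg': "\<forall>j. 1 \<le> j \<longrightarrow> j \<le> 2*r \<longrightarrow> lam j < 0" using neg nr by auto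
    have ln: "lam n < 0" using neg nr by simp
    have sn: "(\<Sum>j=1..n. lam j) = (\<Sum>j=1..2*r. lam j) + lam n" using nr by simp
    have g4: "good a b 4 (Q4 (lam 0 + (\<Sum>j=1..2*r. lam j)) (lam n) a b) P4 [lam 0 + (\<Sum>j=1..2*r. lam j), lam n]"
      by (rule base4) (use tot ca cb sn ln in auto)
    have ex0: "\<exists>Q P. good a b (4 + 2*r) Q P
     ((lam 0 + (\<Sum>j=1..2*(r-r). lam j)) # map lam [2*(r-r)+1..<2*r+1] @ [lam n])"
      by (rule iter[OF g4 fpos neg']) simp
    have L: "(lam 0 + (\<Sum>j=1..2*(r-r). lam j)) # map lam [2*(r-r)+1..<2*r+1] @ [lam n] = map lam [0..<n+1]"
    proof -
      have "[0..<n+1] = [0..<2*r+1] @ [n]" using nr by simp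
      moreover have "[0..<2*r+1] = 0 # [1..<2*r+1]" by (simp add: upt_conv_Cons)
      ultimately show ?thesis by simp
    qed
    have K: "4 + 2*r = n+3" using nr by simp
    show ?thesis using ex0 unfolding L K .
  next
    case False
    then obtain r' where nr': "n = 2*r'" by (auto elim: evenE)
    define r where "r = r' - 1"
    have nr: "n = 2*r+2" using nr' assms(1) unfolding r_def by simp
    have fpos: "\<forall>m\<le>r. lam 0 + (\<Sum>j=1..2*m. lam j) \<ge> 0"
    proof (intro allI impI)
      fix m assume "m \<le> r"
      then have "2*m \<le> n" using nr by simp
      then show "lam 0 + (\<Sum>j=1..2*m. lam j) \<ge> 0" using fmono[of "2*m"] norm_ge_zero[of "Complex a b"] by linarith
    qed
    have neg': "\<forall>j. 1 \<le> j \<longrightarrow> j \<le> 2*r \<longrightarrow> lam j < 0" using neg nr by auto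
    have ln: "lam (2*r+2) < 0" "lam (2*r+1) < 0" using neg nr by auto
    have sn: "(\<Sum>j=1..n. lam j) = (\<Sum>j=1..2*r. lam j) + lam (2*r+1) + lam (2*r+2)" using nr by simp
    have f0: "lam 0 + (\<Sum>j=1..2*r. lam j) \<ge> 0" using fpos by simp
    have "\<exists>Q P. good a b 5 Q P [lam 0 + (\<Sum>j=1..2*r. lam j), lam (2*r+1), lam (2*r+2)]"
      by (rule base5) (use f0 ln tot ca cb sn in auto)
    then obtain Q5 P5 where g5: "good a b 5 Q5 P5 [lam 0 + (\<Sum>j=1..2*r. lam j), lam (2*r+1), lam (2*r+2)]"
      by blast
    have ex0: "\<exists>Q P. good a b (5 + 2*r) Q P
     ((lam 0 + (\<Sum>j=1..2*(r-r). lam j)) # map lam [2*(r-r)+1..<2*r+1] @ [lam (2*r+1), lam (2*r+2)])"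
      by (rule iter[OF g5 fpos neg']) simp
    have L: "(lam 0 + (\<Sum>j=1..2*(r-r). lam j)) # map lam [2*(r-r)+1..<2*r+1] @ [lam (2*r+1), lam (2*r+2)] = map lam [0..<n+1]"
    proof -
      have "[0..<n+1] = [0..<2*r+1] @ [2*r+1, 2*r+2]" using nr by simp
      moreover have "[0..<2*r+1] = 0 # [1..<2*r+1]" by (simp add: upt_conv_Cons)
      ultimately show ?thesis by simp
    qed
    have K: "5 + 2*r = n+3" using nr by simp
    show ?thesis using ex0 unfolding L K .
  qed
  then obtain Q P where g: "good a b (n+3) Q P (map lam [0..<n+1])" by blast
  note fin = good_final[OF g]
  have cp: "char_poly (map_mat complex_of_real Q) = (\<Prod>d\<leftarrow>map lam [0..<n+1]. [: - complex_of_real d, 1 :]) *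
       ([: - Complex a b, 1:] * [: - cnj (Complex a b), 1 :])" using fin by blast
  have e: "(\<Prod>e\<leftarrow>(map (\<lambda>j. complex_of_real (lam j)) [0..<n+1] @ [Complex a b, cnj (Complex a b)]). [:-e,1:]) =
      (\<Prod>d\<leftarrow>map lam [0..<n+1]. [: - complex_of_real d, 1 :]) * ([: - Complex a b, 1:] * [: - cnj (Complex a b), 1 :])"
    by (simp only: map_append prod_list.append map_map o_def list.map prod_list.Cons prod_list.Nil mult_1_right)
  have "has_eigenvalues Q (map (\<lambda>j. complex_of_real (lam j)) [0..<n+1] @ [Complex a b, cnj (Complex a b)])"
    unfolding has_eigenvalues_def cp e ..
  then show ?thesis using fin by blast
qed

end
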